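(* Let $1\le m<T$ and $\sigma_1\ge\sigma_2\ge\dots\ge\sigma_m>0$, $\boldsymbol{\Sigma}=\operatorname{diag}(\sigma_1,\dots,\sigma_m)$, and $S=S^{(m,T)}_{\boldsymbol{\Sigma}^2}$. Then for every $\mathbf{S}\in S$ and every tangent vector $\boldsymbol{\Delta}\in T_{\mathbf{S}}S$ with $g(\boldsymbol{\Delta},\boldsymbol{\Delta})=1$, one has $|\mathbf{II}_{\mathbf{S}}(\boldsymbol{\Delta},\boldsymbol{\Delta})|\le 1/\sigma_m$, and equality is attained for some unit tangent vector; hence $$\max_{\mathbf{S}\in S,\ \boldsymbol{\Delta}\in T_{\mathbf{S}}S,\ g(\boldsymbol{\Delta},\boldsymbol{\Delta})=1}|\mathbf{II}_{\mathbf{S}}(\boldsymbol{\Delta},\boldsymbol{\Delta})|=\frac1{\sigma_m}.$$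
   Context: $S_{\mathbf{A}}^{(m,T)}=\{\mathbf{X}\in\mathbb{C}^{m\times T}:\mathbf{X}\mathbf{X}^H=\mathbf{A}\}$, viewed as a real embedded submanifold of $\mathbb{C}^{m\times T}\cong\mathbb{R}^{2mT}$ with the Euclidean induced metric $g(\boldsymbol{\Delta}_1,\boldsymbol{\Delta}_2)=\Re\operatorname{tr}(\boldsymbol{\Delta}_1\boldsymbol{\Delta}_2^H)$. $\mathbf{II}_{\mathbf{S}}$ is the (vector-valued) second fundamental form of this embedding at $\mathbf{S}$, and $|\cdot|$ is the Frobenius norm. *)

theory Defs
  imports "HOL-Analysis.Analysis"
begin

text \<open>Complex m x T matrices are modelled as complex^'T^'m; this type is a
 euclidean_space whose inner product is Re tr(D1 D2^H) and whose norm is the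
 Frobenius norm.\<close>

definition conj_transpose :: "complex^'c^'r \<Rightarrow> complex^'r^'c" where
  "conj_transpose X = (\<chi> i j. cnj (X $ j $ i))"

definition diag_mat :: "('r \<Rightarrow> complex) \<Rightarrow> complex^'r^'r" where
  "diag_mat d = (\<chi> i j. if i = j then d i else 0)"

definition gram_level_set :: "complex^'r^'r \<Rightarrow> (complex^'c^'r) set" where
  "gram_level_set A = {X. X ** conj_transpose X = A}"

definition tangent_space :: "'a::euclidean_space set \<Rightarrow> 'a \<Rightarrow> 'a set" where
  "tangent_space M p = {v. \<exists>\<gamma> e. e > 0 \<and> \<gamma> 0 = p \<and> (\<forall>t\<in>ball 0 e. \<gamma> t \<in> M) \<and>
       (\<gamma> has_vector_derivative v) (at 0)}"

definition normal_part :: "'a::euclidean_space set \<Rightarrow> 'a \<Rightarrow> 'a" where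
  "normal_part V x = (THE w. (\<forall>v\<in>V. inner w v = 0) \<and> x - w \<in> V)"

definition second_fundamental_form :: "'a::euclidean_space set \<Rightarrow> 'a \<Rightarrow> 'a \<Rightarrow> 'a" where
  "second_fundamental_form M p v = (SOME w. \<exists>\<gamma> \<gamma>' a e. e > 0 \<and> \<gamma> 0 = p \<and>
       (\<forall>t\<in>ball 0 e. \<gamma> t \<in> M \<and> (\<gamma> has_vector_derivative \<gamma>' t) (at t)) \<and>
       \<gamma>' 0 = v \<and> (\<gamma>' has_vector_derivative a) (at 0) \<and>
       w = normal_part (tangent_space M p) a)"

end

theory Submission
  imports Defs
begin

typedef (overloaded) 'a endo = "UNIV :: ('a::euclidean_space \<Rightarrow>\<^sub>L 'a) set" by simp
setup_lifting type_definition_endo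

instantiation endo :: (euclidean_space) real_normed_algebra_1
begin
lift_definition zero_endo :: "'a endo" is 0 .
lift_definition one_endo :: "'a endo" is id_blinfun .
lift_definition plus_endo :: "'a endo \<Rightarrow> 'a endo \<Rightarrow> 'a endo" is "(+)" .
lift_definition minus_endo :: "'a endo \<Rightarrow> 'a endo \<Rightarrow> 'a endo" is "(-)" .
lift_definition uminus_endo :: "'a endo \<Rightarrow> 'a endo" is uminus .
lift_definition scaleR_endo :: "real \<Rightarrow> 'a endo \<Rightarrow> 'a endo" is scaleR .
lift_definition times_endo :: "'a endo \<Rightarrow> 'a endo \<Rightarrow> 'a endo" is "(o\<^sub>L)" .
lift_definition norm_endo :: "'a endo \<Rightarrow> real" is norm .
definition dist_endo :: "'a endo \<Rightarrow> 'a endo \<Rightarrow> real" where "dist_endo a b = norm (a - b)"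
definition sgn_endo :: "'a endo \<Rightarrow> 'a endo" where "sgn_endo x = scaleR (inverse (norm x)) x"
definition uniformity_endo :: "('a endo \<times> 'a endo) filter" where
  "uniformity_endo = (INF e\<in>{0<..}. principal {(x, y). dist x y < e})"
definition open_endo :: "'a endo set \<Rightarrow> bool" where
  "open_endo S = (\<forall>x\<in>S. \<forall>\<^sub>F (x', y) in uniformity. x' = x \<longrightarrow> y \<in> S)"
instance
proof standard
  show "(0::'a endo) \<noteq> 1"
  proof
    assume "(0::'a endo) = 1"
    then have "norm (0::'a endo) = norm (1::'a endo)" by simp
    then show False by transfer simp
  qed
qed (unfold dist_endo_def open_endo_def sgn_endo_def uniformity_endo_def,
     (rule refl | (transfer, force simp: algebra_simps norm_triangle_ineq norm_blinfun_compose
       intro!: blinfun_eqI simp: blinfun.bilinear_simps))+)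
end

lemma Rep_endo_conv: "X \<longlonglongrightarrow> L \<Longrightarrow> Abs_endo X' = Abs_endo X' " by simp

instance endo :: (euclidean_space) banach
proof
  fix X :: "nat \<Rightarrow> 'a endo"
  assume "Cauchy X"
  have d: "dist (Rep_endo a) (Rep_endo b) = dist a b" for a b :: "'a endo"
    by (simp add: dist_endo_def dist_norm norm_endo.rep_eq minus_endo.rep_eq)
  have "Cauchy (\<lambda>n. Rep_endo (X n))"
    using \<open>Cauchy X\<close> unfolding Cauchy_def d .
  then obtain L where L: "(\<lambda>n. Rep_endo (X n)) \<longlonglongrightarrow> L"
    using convergent_eq_Cauchy convergent_def by blast
  have "X \<longlonglongrightarrow> Abs_endo L"
    using L unfolding LIMSEQ_def by (metis d Abs_endo_inverse UNIV_I)
  then show "convergent X" by (auto simp: convergent_def)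
qed

definition hp :: "complex^'n \<Rightarrow> complex^'n \<Rightarrow> complex" where
  "hp x y = (\<Sum>\<tau>\<in>UNIV. x$\<tau> * cnj (y$\<tau>))"
definition cm :: "complex \<Rightarrow> complex^'n \<Rightarrow> complex^'n" where
  "cm c x = (\<chi> \<tau>. c * x$\<tau>)"

lemma cm_nth[simp]: "cm c x $ \<tau> = c * x $ \<tau>" by (simp add: cm_def)

lemma hp_add_left[simp]: "hp (x + y) z = hp x z + hp y z"
  by (simp add: hp_def distrib_right sum.distrib)
lemma hp_add_right[simp]: "hp z (x + y) = hp z x + hp z y"
  by (simp add: hp_def distrib_left sum.distrib)
lemma hp_diff_left[simp]: "hp (x - y) z = hp x z - hp y z"
  by (simp add: hp_def left_diff_distrib sum_subtractf)
lemma hp_diff_right[simp]: "hp z (x - y) = hp z x - hp z y"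
  by (simp add: hp_def right_diff_distrib sum_subtractf)
lemma hp_minus_left[simp]: "hp (- x) z = - hp x z"
  by (simp add: hp_def sum_negf)
lemma hp_minus_right[simp]: "hp z (- x) = - hp z x"
  by (simp add: hp_def sum_negf)
lemma hp_zero_left[simp]: "hp 0 z = 0" by (simp add: hp_def)
lemma hp_zero_right[simp]: "hp z 0 = 0" by (simp add: hp_def)
lemma hp_cm_left[simp]: "hp (cm c x) y = c * hp x y"
  by (simp add: hp_def sum_distrib_left mult.assoc)
lemma hp_cm_right[simp]: "hp x (cm c y) = cnj c * hp x y"
  by (simp add: hp_def sum_distrib_left algebra_simps)
lemma scaleR_nth_c: "(r *\<^sub>R x) $ \<tau> = of_real r * (x $ \<tau> :: complex)"
  by (simp only: vector_scaleR_component) (simp add: scaleR_conv_of_real)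

lemma hp_scaleR_left[simp]: "hp (r *\<^sub>R x) y = of_real r * hp x y"
  by (simp add: hp_def sum_distrib_left scaleR_nth_c mult.assoc del: vector_scaleR_component)
lemma hp_scaleR_right[simp]: "hp x (r *\<^sub>R y) = of_real r * hp x y"
  by (simp add: hp_def sum_distrib_left scaleR_nth_c algebra_simps del: vector_scaleR_component)
lemma hp_sum_left: "hp (\<Sum>i\<in>A. f i) y = (\<Sum>i\<in>A. hp (f i) y)"
  by (induct A rule: infinite_finite_induct) auto
lemma hp_sum_right: "hp y (\<Sum>i\<in>A. f i) = (\<Sum>i\<in>A. hp y (f i))"
  by (induct A rule: infinite_finite_induct) auto
lemma cnj_hp: "cnj (hp x y) = hp y x"
  by (simp add: hp_def mult.commute)
lemma inner_hp: "inner x y = Re (hp x y)"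
  by (simp add: hp_def inner_vec_def inner_complex_def Re_sum)
lemma Im_hp_self: "Im (hp x x) = 0"
  by (simp add: hp_def Im_sum)
lemma hp_self: "hp x x = of_real (inner x x)"
  by (simp add: inner_hp complex_eq_iff Im_hp_self)

lemma hp_norm_le: "norm (hp a b) \<le> norm a * norm b * CARD('n)" for a b :: "complex^'n"
proof -
  have "norm (hp a b) \<le> (\<Sum>\<tau>\<in>UNIV. norm (a$\<tau>) * norm (b$\<tau>))"
    unfolding hp_def by (rule order_trans[OF norm_sum]) (simp add: norm_mult)
  also have "\<dots> \<le> (\<Sum>\<tau>\<in>(UNIV::'n set). norm a * norm b)"
    by (intro sum_mono mult_mono Finite_Cartesian_Product.norm_nth_le) auto
  also have "\<dots> = norm a * norm b * CARD('n)" by simp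
  finally show ?thesis .
qed

lemma bounded_bilinear_hp: "bounded_bilinear (hp :: complex^'n \<Rightarrow> _ \<Rightarrow> _)"
proof (rule bounded_bilinear.intro)
  fix a a' b b' :: "complex^'n" and r :: real
  show "hp (a + a') b = hp a b + hp a' b" "hp b (a + a') = hp b a + hp b a'"
    "hp (r *\<^sub>R a) b = r *\<^sub>R hp a b" "hp a (r *\<^sub>R b) = r *\<^sub>R hp a b"
    by (simp_all add: scaleR_conv_of_real[where 'a=complex])
next
  show "\<exists>K. \<forall>a b::complex^'n. norm (hp a b) \<le> norm a * norm b * K"
    using hp_norm_le by blast
qed

lemma gram_nth: "(X ** conj_transpose X) $ i $ j = hp (X$i) (X$j)"
  by (simp add: matrix_matrix_mult_def conj_transpose_def hp_def)

definition Mset :: "('m::finite \<Rightarrow> real) \<Rightarrow> (complex^'T::finite^'m) set" where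
  "Mset \<sigma> = {X. \<forall>i j. hp (X$i) (X$j) = (if i = j then complex_of_real ((\<sigma> i)\<^sup>2) else 0)}"

lemma M_eq: "gram_level_set (diag_mat (\<lambda>i. complex_of_real ((\<sigma> i)\<^sup>2))) = Mset \<sigma>"
  by (auto simp: gram_level_set_def Mset_def vec_eq_iff gram_nth diag_mat_def)

definition Vsp :: "complex^'T::finite^'m::finite \<Rightarrow> (complex^'T^'m) set" where
  "Vsp S = {D. \<forall>i j. hp (D$i) (S$j) + hp (S$i) (D$j) = 0}"

lemma Mset_hp: "X \<in> Mset \<sigma> \<Longrightarrow> hp (X$i) (X$j) = (if i = j then complex_of_real ((\<sigma> i)\<^sup>2) else 0)"
  unfolding Mset_def by (drule CollectD) (erule allE)+

lemma subspace_Vsp: "subspace (Vsp S)"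
  unfolding subspace_def Vsp_def
proof (intro conjI ballI allI impI; clarsimp)
  fix x y :: "complex^'a^'b" and i j
  assume x: "\<forall>i j. hp (x $ i) (S $ j) + hp (S $ i) (x $ j) = 0"
     and y: "\<forall>i j. hp (y $ i) (S $ j) + hp (S $ i) (y $ j) = 0"
  have "hp (x $ i) (S $ j) + hp (y $ i) (S $ j) + (hp (S $ i) (x $ j) + hp (S $ i) (y $ j)) =
     (hp (x $ i) (S $ j) + hp (S $ i) (x $ j)) + (hp (y $ i) (S $ j) + hp (S $ i) (y $ j))"
    by (simp add: algebra_simps)
  then show "hp (x $ i) (S $ j) + hp (y $ i) (S $ j) + (hp (S $ i) (x $ j) + hp (S $ i) (y $ j)) = 0"
    using x y by simp
next
  fix c :: real and x :: "complex^'a^'b" and i j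
  assume x: "\<forall>i j. hp (x $ i) (S $ j) + hp (S $ i) (x $ j) = 0"
  have "complex_of_real c * hp (x $ i) (S $ j) + complex_of_real c * hp (S $ i) (x $ j) =
     complex_of_real c * (hp (x $ i) (S $ j) + hp (S $ i) (x $ j))"
    by (simp add: distrib_left)
  then show "complex_of_real c * hp (x $ i) (S $ j) + complex_of_real c * hp (S $ i) (x $ j) = 0"
    using x by simp
qed

lemma deriv_zero_if_const:
  fixes f :: "real \<Rightarrow> 'a::real_normed_vector"
  assumes "(f has_vector_derivative f') (at t)" "t \<in> ball 0 e" "\<And>s. s \<in> ball 0 e \<Longrightarrow> f s = c"
  shows "f' = 0"
proof -
  have "((\<lambda>s. c) has_vector_derivative 0) (at t)" by (rule has_vector_derivative_const)
  then have "(f has_vector_derivative 0) (at t)"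
    by (rule has_vector_derivative_transform_within_open[where S="ball 0 e"]) (use assms in auto)
  then show ?thesis using assms(1) vector_derivative_unique_at by blast
qed

lemma hp_rows_deriv:
  fixes \<gamma> :: "real \<Rightarrow> complex^'T::finite^'m::finite"
  assumes "(\<gamma> has_vector_derivative D) (at t)" "(\<eta> has_vector_derivative E) (at t)"
  shows "((\<lambda>s. hp (\<gamma> s $ i) (\<eta> s $ j)) has_vector_derivative
           hp (\<gamma> t $ i) (E $ j) + hp (D $ i) (\<eta> t $ j)) (at t)"
proof -
  have a: "((\<lambda>s. \<gamma> s $ i) has_vector_derivative D $ i) (at t)"
    using bounded_linear.has_vector_derivative[OF bounded_linear_vec_nth assms(1)] .
  have b: "((\<lambda>s. \<eta> s $ j) has_vector_derivative E $ j) (at t)"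
    using bounded_linear.has_vector_derivative[OF bounded_linear_vec_nth assms(2)] .
  show ?thesis
    using bounded_bilinear.has_vector_derivative[OF bounded_bilinear_hp a b] .
qed

lemma tangent_sub_Vsp:
  assumes "S \<in> Mset \<sigma>" "D \<in> tangent_space (Mset \<sigma>) S"
  shows "D \<in> Vsp S"
proof -
  obtain \<gamma> e where g: "e > 0" "\<gamma> 0 = S" "\<And>t. t \<in> ball 0 e \<Longrightarrow> \<gamma> t \<in> Mset \<sigma>"
    "(\<gamma> has_vector_derivative D) (at 0)"
    using assms(2) unfolding tangent_space_def mem_Collect_eq by metis
  show ?thesis unfolding Vsp_def
  proof (intro CollectI allI)
    fix i j
    have c: "hp (\<gamma> s $ i) (\<gamma> s $ j) = (if i = j then complex_of_real ((\<sigma> i)\<^sup>2) else 0)"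
      if "s \<in> ball 0 e" for s
      using g(3)[OF that] by (rule Mset_hp)
    have "hp (\<gamma> 0 $ i) (D $ j) + hp (D $ i) (\<gamma> 0 $ j) = 0"
      using deriv_zero_if_const[OF hp_rows_deriv[OF g(4) g(4)], of e, OF _ c] g(1) by simp
    then show "hp (D $ i) (S $ j) + hp (S $ i) (D $ j) = 0" using g(2) by (simp add: add.commute)
  qed
qed

lemma accel_eq:
  assumes "e > 0" "\<And>t. t \<in> ball 0 e \<Longrightarrow> \<gamma> t \<in> Mset \<sigma> \<and> (\<gamma> has_vector_derivative \<gamma>' t) (at t)"
    "(\<gamma>' has_vector_derivative a) (at 0)"
  shows "hp (a$i) (\<gamma> 0$j) + 2 * hp (\<gamma>' 0$i) (\<gamma>' 0$j) + hp (\<gamma> 0$i) (a$j) = 0"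
proof -
  let ?g = "\<lambda>s. hp (\<gamma> s $ i) (\<gamma>' s $ j) + hp (\<gamma>' s $ i) (\<gamma> s $ j)"
  have c: "hp (\<gamma> s $ i) (\<gamma> s $ j) = (if i = j then complex_of_real ((\<sigma> i)\<^sup>2) else 0)"
    if "s \<in> ball 0 e" for s
    using assms(2)[OF that] by (intro Mset_hp) blast
  have z: "?g t = 0" if t: "t \<in> ball 0 e" for t
  proof -
    have d: "(\<gamma> has_vector_derivative \<gamma>' t) (at t)" using assms(2)[OF t] by blast
    have "hp (\<gamma> t $ i) (\<gamma>' t $ j) + hp (\<gamma>' t $ i) (\<gamma> t $ j) = 0"
      using deriv_zero_if_const[OF hp_rows_deriv[OF d d], of e, OF t c] by simp
    then show ?thesis by simp
  qed
  have g0: "(\<gamma> has_vector_derivative \<gamma>' 0) (at 0)" using assms(2)[of 0] assms(1) by simp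
  have "((\<lambda>s. hp (\<gamma> s $ i) (\<gamma>' s $ j)) has_vector_derivative
          hp (\<gamma> 0 $ i) (a $ j) + hp (\<gamma>' 0 $ i) (\<gamma>' 0 $ j)) (at 0)"
    by (rule hp_rows_deriv[OF g0 assms(3)])
  moreover have "((\<lambda>s. hp (\<gamma>' s $ i) (\<gamma> s $ j)) has_vector_derivative
          hp (\<gamma>' 0 $ i) (\<gamma>' 0 $ j) + hp (a $ i) (\<gamma> 0 $ j)) (at 0)"
    by (rule hp_rows_deriv[OF assms(3) g0])
  ultimately have "(?g has_vector_derivative
      (hp (\<gamma> 0 $ i) (a $ j) + hp (\<gamma>' 0 $ i) (\<gamma>' 0 $ j)) +
      (hp (\<gamma>' 0 $ i) (\<gamma>' 0 $ j) + hp (a $ i) (\<gamma> 0 $ j))) (at 0)"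
    by (rule has_vector_derivative_add)
  then have "(hp (\<gamma> 0 $ i) (a $ j) + hp (\<gamma>' 0 $ i) (\<gamma>' 0 $ j)) +
      (hp (\<gamma>' 0 $ i) (\<gamma>' 0 $ j) + hp (a $ i) (\<gamma> 0 $ j)) = 0"
    using deriv_zero_if_const[of ?g _ 0 e 0] z assms(1) by simp
  moreover have "hp (a$i) (\<gamma> 0$j) + 2 * hp (\<gamma>' 0$i) (\<gamma>' 0$j) + hp (\<gamma> 0$i) (a$j) =
      (hp (\<gamma> 0 $ i) (a $ j) + hp (\<gamma>' 0 $ i) (\<gamma>' 0 $ j)) +
      (hp (\<gamma>' 0 $ i) (\<gamma>' 0 $ j) + hp (a $ i) (\<gamma> 0 $ j))"
    by (simp only: mult_2 add_ac)
  ultimately show ?thesis by simp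
qed

lemma normal_part_prop:
  fixes V :: "'a::euclidean_space set"
  assumes "subspace V"
  shows "(\<forall>v\<in>V. inner (normal_part V x) v = 0) \<and> x - normal_part V x \<in> V"
proof -
  let ?P = "\<lambda>w. (\<forall>v\<in>V. inner w v = 0) \<and> x - w \<in> V"
  obtain y z where yz: "y \<in> span V" "\<And>w. w \<in> span V \<Longrightarrow> orthogonal z w" "x = y + z"
    by (rule orthogonal_subspace_decomp_exists[of V x]) blast
  have sV: "span V = V" using assms by (simp add: span_eq_iff)
  have "?P z" using yz sV by (auto simp: orthogonal_def)
  moreover have "w1 = w2" if "?P w1" "?P w2" for w1 w2
  proof -
    have "w1 - w2 = (x - w2) - (x - w1)" by simp
    also have "\<dots> \<in> V" using that assms by (metis subspace_diff)
    finally have d: "w1 - w2 \<in> V" .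
    have "inner (w1 - w2) (w1 - w2) = inner w1 (w1 - w2) - inner w2 (w1 - w2)"
      by (simp add: inner_diff_left)
    also have "\<dots> = 0" using that d by simp
    finally show ?thesis by simp
  qed
  ultimately have "?P (THE w. ?P w)" by (intro theI[of ?P z]) auto
  then show ?thesis unfolding normal_part_def .
qed

lemma inner_mat: "inner (X::complex^'T::finite^'m::finite) Y = (\<Sum>a\<in>UNIV. Re (hp (X$a) (Y$a)))"
  by (simp add: inner_vec_def[of X Y] inner_hp)

lemma hp_if_right: "hp x (if P then y else z) = (if P then hp x y else hp x z)" by simp
lemma hp_if_left: "hp (if P then y else z) x = (if P then hp y x else hp z x)" by simp

lemma normal_struct1:
  fixes S w :: "complex^'T::finite^'m::finite"
  assumes S: "S \<in> Mset \<sigma>" and pos: "\<And>i. \<sigma> i > 0" and w: "\<forall>v\<in>Vsp S. inner w v = 0"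
  shows "w$i = (\<Sum>j\<in>UNIV. cm (hp (w$i) (S$j) / complex_of_real ((\<sigma> j)\<^sup>2)) (S$j))"
proof -
  define r where "r = w$i - (\<Sum>j\<in>UNIV. cm (hp (w$i) (S$j) / complex_of_real ((\<sigma> j)\<^sup>2)) (S$j))"
  have hrS: "hp r (S$l) = 0" for l
  proof -
    have ne: "complex_of_real ((\<sigma> l)\<^sup>2) \<noteq> 0" using pos[of l] by simp
    have "hp r (S$l) = hp (w$i) (S$l) - (\<Sum>j\<in>UNIV. hp (w$i) (S$j) / complex_of_real ((\<sigma> j)\<^sup>2) *
            (if j = l then complex_of_real ((\<sigma> j)\<^sup>2) else 0))"
      unfolding r_def by (simp add: hp_sum_left Mset_hp[OF S])
    also have "\<dots> = hp (w$i) (S$l) - (\<Sum>j\<in>UNIV. if j = l then hp (w$i) (S$l) else 0)"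
      using ne by (intro arg_cong2[where f="(-)"] refl sum.cong) auto
    also have "\<dots> = 0" by simp
    finally show ?thesis .
  qed
  have hSr: "hp (S$l) r = 0" for l using hrS[of l] cnj_hp[of r "S$l"] by simp
  define Z :: "complex^'T^'m" where "Z = (\<chi> a. if a = i then r else 0)"
  have "Z \<in> Vsp S"
    unfolding Vsp_def Z_def
    by (simp add: hrS hSr hp_if_left hp_if_right)
  then have "inner w Z = 0" using w by blast
  then have "Re (hp (w$i) r) = 0"
    unfolding inner_mat Z_def by (simp add: hp_if_right if_distrib[of Re] cong: if_cong)
  moreover have "hp (w$i) r = hp r r"
  proof -
    let ?s = "(\<Sum>j\<in>UNIV. cm (hp (w$i) (S$j) / complex_of_real ((\<sigma> j)\<^sup>2)) (S$j))"
    have e: "w$i = r + ?s" unfolding r_def by simp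
    have "hp (w$i) r = hp (r + ?s) r" by (rule arg_cong[where f="\<lambda>x. hp x r"], rule e)
    also have "\<dots> = hp r r + (\<Sum>j\<in>UNIV. hp (w$i) (S$j) / complex_of_real ((\<sigma> j)\<^sup>2) * hp (S$j) r)"
      by (simp only: hp_add_left hp_sum_left hp_cm_left)
    also have "\<dots> = hp r r" using hSr by simp
    finally show ?thesis .
  qed
  ultimately have "inner r r = 0" by (simp add: inner_hp)
  then have "r = 0" by simp
  then show ?thesis unfolding r_def by simp
qed

lemma normal_struct2:
  fixes S w :: "complex^'T::finite^'m::finite"
  assumes S: "S \<in> Mset \<sigma>" and pos: "\<And>i. \<sigma> i > 0" and w: "\<forall>v\<in>Vsp S. inner w v = 0"
  shows "complex_of_real ((\<sigma> i)\<^sup>2) * hp (w$i) (S$j) = complex_of_real ((\<sigma> j)\<^sup>2) * cnj (hp (w$j) (S$i))"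
proof -
  define \<rho> where "\<rho> = (\<sigma> j)\<^sup>2 / (\<sigma> i)\<^sup>2"
  have rho: "complex_of_real \<rho> * complex_of_real ((\<sigma> i)\<^sup>2) = complex_of_real ((\<sigma> j)\<^sup>2)"
    using pos[of i] unfolding \<rho>_def by (simp flip: of_real_mult)
  have rho2: "complex_of_real \<rho> * (complex_of_real (\<sigma> i))\<^sup>2 = (complex_of_real (\<sigma> j))\<^sup>2"
    using rho by simp
  have r1: "\<rho> = 1" if "i = j" using pos[of i] that unfolding \<rho>_def by simp
  define Y where "Y z = (\<chi> a. (if a = i then cm z (S$j) else 0) +
      (if a = j then cm (-(cnj z * complex_of_real \<rho>)) (S$i) else 0))" for z
  have YV: "Y z \<in> Vsp S" for z
    unfolding Vsp_def Y_def
    by (cases "i = j") (simp_all add: hp_if_right hp_if_left Mset_hp[OF S] rho2 r1)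
  have inY: "inner w (Y z) = Re (cnj z * hp (w$i) (S$j)) - \<rho> * Re (z * hp (w$j) (S$i))" for z
    unfolding inner_mat Y_def
    by (simp add: hp_if_right if_distrib[of Re] sum.distrib cong: if_cong) (simp add: algebra_simps)
  define c1 where "c1 = hp (w$i) (S$j)"
  define c2 where "c2 = hp (w$j) (S$i)"
  define z where "z = c1 - complex_of_real \<rho> * cnj c2"
  have "inner w (Y z) = 0" using w YV by blast
  then have "Re (cnj z * c1) - \<rho> * Re (z * c2) = 0" using inY[of z] unfolding c1_def c2_def by simp
  moreover have "Re (cnj z * c1) - \<rho> * Re (z * c2) = Re (cnj z * z)"
    unfolding z_def by (simp add: algebra_simps)
  moreover have "Re (cnj z * z) = (Re z)\<^sup>2 + (Im z)\<^sup>2" by (simp add: power2_eq_square)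
  ultimately have "(Re z)\<^sup>2 + (Im z)\<^sup>2 = 0" by simp
  then have "z = 0" by (simp add: complex_eq_iff sum_power2_eq_zero_iff)
  then have "c1 = complex_of_real \<rho> * cnj c2" unfolding z_def by simp
  then show ?thesis unfolding c1_def c2_def using rho by (metis mult.assoc mult.commute)
qed

lemma aux_sq: "x > 0 \<Longrightarrow> y > 0 \<Longrightarrow> (2 * P * (x / y))\<^sup>2 / x = 4 * P\<^sup>2 * x / y\<^sup>2" for x y P :: real
  by (simp add: field_simps power2_eq_square)

lemma norm_formula:
  fixes S w a D :: "complex^'T::finite^'m::finite"
  assumes S: "S \<in> Mset \<sigma>" and pos: "\<And>i. \<sigma> i > 0" and w: "\<forall>v\<in>Vsp S. inner w v = 0"
    and aw: "a - w \<in> Vsp S"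
    and acc: "\<And>i j. hp (a$i) (S$j) + 2 * hp (D$i) (D$j) + hp (S$i) (a$j) = 0"
  shows "(norm w)\<^sup>2 = (\<Sum>i\<in>UNIV. \<Sum>j\<in>UNIV.
            4 * (cmod (hp (D$i) (D$j)))\<^sup>2 * (\<sigma> j)\<^sup>2 / ((\<sigma> i)\<^sup>2 + (\<sigma> j)\<^sup>2)\<^sup>2)"
proof -
  define c where "c i j = hp (w$i) (S$j)" for i j
  have cc: "c i j = - 2 * hp (D$i) (D$j) * complex_of_real ((\<sigma> j)\<^sup>2 / ((\<sigma> i)\<^sup>2 + (\<sigma> j)\<^sup>2))" for i j
  proof -
    have "hp ((a - w)$i) (S$j) + hp (S$i) ((a - w)$j) = 0" using aw unfolding Vsp_def by blast
    then have "hp (a$i) (S$j) + hp (S$i) (a$j) = c i j + cnj (c j i)"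
      unfolding c_def by (simp add: cnj_hp algebra_simps)
    moreover have "hp (a$i) (S$j) + hp (S$i) (a$j) = - (2 * hp (D$i) (D$j))"
      unfolding eq_neg_iff_add_eq_0 using acc[of i j] by (simp add: add_ac)
    ultimately have h1: "c i j + cnj (c j i) = - 2 * hp (D$i) (D$j)" by simp
    have "complex_of_real ((\<sigma> j)\<^sup>2) * c j i = complex_of_real ((\<sigma> i)\<^sup>2) * cnj (c i j)"
      unfolding c_def by (rule normal_struct2[OF S pos w])
    then have h2: "complex_of_real ((\<sigma> j)\<^sup>2) * cnj (c j i) = complex_of_real ((\<sigma> i)\<^sup>2) * c i j"
      by (metis complex_cnj_complex_of_real complex_cnj_mult complex_cnj_cnj)
    have "complex_of_real ((\<sigma> i)\<^sup>2 + (\<sigma> j)\<^sup>2) * c i j = complex_of_real ((\<sigma> j)\<^sup>2) * (c i j + cnj (c j i))"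
      using h2 by (simp add: algebra_simps)
    also have "\<dots> = complex_of_real ((\<sigma> j)\<^sup>2) * (- 2 * hp (D$i) (D$j))" using h1 by simp
    finally have e: "complex_of_real ((\<sigma> i)\<^sup>2 + (\<sigma> j)\<^sup>2) * c i j = complex_of_real ((\<sigma> j)\<^sup>2) * (- 2 * hp (D$i) (D$j))" .
    have ne: "complex_of_real ((\<sigma> i)\<^sup>2 + (\<sigma> j)\<^sup>2) \<noteq> 0"
      using pos[of i] pos[of j] by (simp only: of_real_eq_0_iff) (smt (verit) zero_less_power)
    show ?thesis using e ne by (simp add: field_simps)
  qed
  have hw: "hp (w$i) (w$i) = (\<Sum>j\<in>UNIV. complex_of_real ((cmod (c i j))\<^sup>2 / (\<sigma> j)\<^sup>2))" for i
  proof -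
    let ?s = "(\<Sum>j\<in>UNIV. cm (hp (w$i) (S$j) / complex_of_real ((\<sigma> j)\<^sup>2)) (S$j))"
    have e: "w$i = ?s" by (rule normal_struct1[OF S pos w])
    have "hp (w$i) (w$i) = hp (w$i) ?s" by (rule arg_cong[where f="\<lambda>x. hp (w$i) x"], rule e)
    also have "\<dots> = (\<Sum>j\<in>UNIV. cnj (c i j / complex_of_real ((\<sigma> j)\<^sup>2)) * c i j)"
      unfolding c_def by (simp only: hp_sum_right hp_cm_right)
    also have "\<dots> = (\<Sum>j\<in>UNIV. complex_of_real ((cmod (c i j))\<^sup>2 / (\<sigma> j)\<^sup>2))"
      by (intro sum.cong refl) (simp add: complex_norm_square[of "c i _"] mult.commute del: of_real_power)
    finally show ?thesis .
  qed
  have "(norm w)\<^sup>2 = inner w w" by (simp add: power2_norm_eq_inner)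
  also have "\<dots> = (\<Sum>i\<in>UNIV. \<Sum>j\<in>UNIV. (cmod (c i j))\<^sup>2 / (\<sigma> j)\<^sup>2)"
    unfolding inner_mat hw by (simp add: Re_sum)
  also have "\<dots> = (\<Sum>i\<in>UNIV. \<Sum>j\<in>UNIV.
            4 * (cmod (hp (D$i) (D$j)))\<^sup>2 * (\<sigma> j)\<^sup>2 / ((\<sigma> i)\<^sup>2 + (\<sigma> j)\<^sup>2)\<^sup>2)"
  proof (intro sum.cong refl)
    fix i j
    have p: "(\<sigma> j)\<^sup>2 > 0" "(\<sigma> i)\<^sup>2 + (\<sigma> j)\<^sup>2 > 0" using pos[of i] pos[of j] by (auto intro: add_pos_pos)
    have "cmod (c i j) = 2 * cmod (hp (D$i) (D$j)) * ((\<sigma> j)\<^sup>2 / ((\<sigma> i)\<^sup>2 + (\<sigma> j)\<^sup>2))"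
      unfolding cc norm_mult norm_minus_cancel norm_of_real using p by simp
    then show "(cmod (c i j))\<^sup>2 / (\<sigma> j)\<^sup>2 =
        4 * (cmod (hp (D$i) (D$j)))\<^sup>2 * (\<sigma> j)\<^sup>2 / ((\<sigma> i)\<^sup>2 + (\<sigma> j)\<^sup>2)\<^sup>2"
      using p aux_sq by simp
  qed
  finally show ?thesis .
qed

definition app :: "'a::euclidean_space endo \<Rightarrow> 'a \<Rightarrow> 'a" where
  "app e x = blinfun_apply (Rep_endo e) x"

lemma app_mult: "app (a * b) x = app a (app b x)"
  by (simp add: app_def times_endo.rep_eq)
lemma app_one: "app 1 x = x"
  by (simp add: app_def one_endo.rep_eq)
lemma bounded_linear_app: "bounded_linear (\<lambda>e. app e x)"
proof (rule bounded_linear_intro[where K="norm x"])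
  fix e f :: "'a endo" and r :: real
  show "app (e + f) x = app e x + app f x"
    by (simp add: app_def plus_endo.rep_eq blinfun.add_left)
  show "app (r *\<^sub>R e) x = r *\<^sub>R app e x"
    by (simp add: app_def scaleR_endo.rep_eq blinfun.scaleR_left)
  show "norm (app e x) \<le> norm e * norm x"
    by (simp add: app_def norm_endo.rep_eq norm_blinfun)
qed
lemma app_Abs: "bounded_linear f \<Longrightarrow> app (Abs_endo (Blinfun f)) x = f x"
  by (simp add: app_def Abs_endo_inverse bounded_linear_Blinfun_apply)

lemma cm_add_left: "cm (a + b) x = cm a x + cm b x"
  by (simp add: vec_eq_iff distrib_right)
lemma cm_add_right: "cm c (x + y) = cm c x + cm c y"
  by (simp add: vec_eq_iff distrib_left)
lemma cm_diff_right: "cm c (x - y) = cm c x - cm c y"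
  by (simp add: vec_eq_iff right_diff_distrib)
lemma cm_zero_left[simp]: "cm 0 x = 0" by (simp add: vec_eq_iff)
lemma cm_zero_right[simp]: "cm c 0 = 0" by (simp add: vec_eq_iff)
lemma cm_one[simp]: "cm 1 x = x" by (simp add: vec_eq_iff)
lemma cm_cm[simp]: "cm a (cm b x) = cm (a * b) x" by (simp add: vec_eq_iff mult.assoc)
lemma cm_sum_left: "cm (\<Sum>i\<in>A. f i) x = (\<Sum>i\<in>A. cm (f i) x)"
  by (induct A rule: infinite_finite_induct) (auto simp: cm_add_left)
lemma cm_sum_right: "cm c (\<Sum>i\<in>A. f i) = (\<Sum>i\<in>A. cm c (f i))"
  by (induct A rule: infinite_finite_induct) (auto simp: cm_add_right)
lemma cm_scaleR: "cm (complex_of_real r * c) x = r *\<^sub>R cm c x"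
  by (simp add: vec_eq_iff scaleR_nth_c mult.assoc del: vector_scaleR_component)

lemma bl_rank1: "bounded_linear (\<lambda>x::complex^'n::finite. cm (hp x v * k) u)"
proof -
  have l: "linear (\<lambda>c::complex. cm (c * k) u)"
    by (rule linearI) (simp_all add: distrib_right cm_add_left scaleR_conv_of_real cm_scaleR mult.assoc)
  have "bounded_linear (\<lambda>c::complex. cm (c * k) u)"
    using l by (simp add: linear_conv_bounded_linear)
  then show ?thesis
    using bounded_linear_compose[OF _ bounded_bilinear.bounded_linear_left[OF bounded_bilinear_hp]]
    by blast
qed

definition Kf :: "('m::finite \<Rightarrow> real) \<Rightarrow> complex^'T::finite^'m \<Rightarrow> complex^'T^'m \<Rightarrow> complex^'T \<Rightarrow> complex^'T" where
  "Kf \<sigma> S D x = (\<Sum>i\<in>UNIV. cm (hp x (S$i) * (1 / complex_of_real ((\<sigma> i)\<^sup>2))) (D$i))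
     - (\<Sum>i\<in>UNIV. cm (hp x (D$i) * (1 / complex_of_real ((\<sigma> i)\<^sup>2))) (S$i))
     - (\<Sum>i\<in>UNIV. \<Sum>j\<in>UNIV. cm (hp x (S$i) * (hp (D$i) (S$j) / complex_of_real ((\<sigma> i)\<^sup>2 * (\<sigma> j)\<^sup>2))) (S$j))"

lemma bl_Kf: "bounded_linear (Kf \<sigma> S D)"
  unfolding Kf_def
  by (intro bounded_linear_sub bounded_linear_sum bl_rank1)

lemma Kf_S:
  assumes S: "S \<in> Mset \<sigma>" and pos: "\<And>i. \<sigma> i > 0" and D: "D \<in> Vsp S"
  shows "Kf \<sigma> S D (S$l) = D$l"
proof -
  have ne: "complex_of_real ((\<sigma> i)\<^sup>2) \<noteq> 0" for i using pos[of i] by simp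
  have nz: "\<sigma> i \<noteq> 0" for i using pos[of i] by simp
  have T1: "(\<Sum>i\<in>UNIV. cm (hp (S$l) (S$i) * (1 / complex_of_real ((\<sigma> i)\<^sup>2))) (D$i)) = D$l"
  proof -
    have "(\<Sum>i\<in>UNIV. cm (hp (S$l) (S$i) * (1 / complex_of_real ((\<sigma> i)\<^sup>2))) (D$i))
        = (\<Sum>i\<in>UNIV. if i = l then D$l else 0)"
      by (intro sum.cong refl) (simp add: Mset_hp[OF S] ne nz)
    then show ?thesis by simp
  qed
  have T3: "(\<Sum>i\<in>UNIV. \<Sum>j\<in>UNIV. cm (hp (S$l) (S$i) * (hp (D$i) (S$j) /
        complex_of_real ((\<sigma> i)\<^sup>2 * (\<sigma> j)\<^sup>2))) (S$j))
      = (\<Sum>j\<in>UNIV. cm (hp (D$l) (S$j) * (1 / complex_of_real ((\<sigma> j)\<^sup>2))) (S$j))"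
  proof -
    have "(\<Sum>i\<in>UNIV. \<Sum>j\<in>UNIV. cm (hp (S$l) (S$i) * (hp (D$i) (S$j) /
        complex_of_real ((\<sigma> i)\<^sup>2 * (\<sigma> j)\<^sup>2))) (S$j))
      = (\<Sum>i\<in>UNIV. if i = l then (\<Sum>j\<in>UNIV. cm (hp (D$l) (S$j) * (1 / complex_of_real ((\<sigma> j)\<^sup>2))) (S$j)) else 0)"
    proof (intro sum.cong refl)
      fix i
      show "(\<Sum>j\<in>UNIV. cm (hp (S$l) (S$i) * (hp (D$i) (S$j) /
        complex_of_real ((\<sigma> i)\<^sup>2 * (\<sigma> j)\<^sup>2))) (S$j)) =
        (if i = l then (\<Sum>j\<in>UNIV. cm (hp (D$l) (S$j) * (1 / complex_of_real ((\<sigma> j)\<^sup>2))) (S$j)) else 0)"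
        using ne[of i] by (cases "i = l") (simp_all add: Mset_hp[OF S] field_simps nz)
    qed
    then show ?thesis by simp
  qed
  have T23: "(\<Sum>i\<in>UNIV. cm (hp (S$l) (D$i) * (1 / complex_of_real ((\<sigma> i)\<^sup>2))) (S$i))
     + (\<Sum>j\<in>UNIV. cm (hp (D$l) (S$j) * (1 / complex_of_real ((\<sigma> j)\<^sup>2))) (S$j)) = 0"
  proof -
    have "(\<Sum>i\<in>UNIV. cm (hp (S$l) (D$i) * (1 / complex_of_real ((\<sigma> i)\<^sup>2))) (S$i))
     + (\<Sum>j\<in>UNIV. cm (hp (D$l) (S$j) * (1 / complex_of_real ((\<sigma> j)\<^sup>2))) (S$j))
     = (\<Sum>i\<in>UNIV. cm ((hp (D$l) (S$i) + hp (S$l) (D$i)) * (1 / complex_of_real ((\<sigma> i)\<^sup>2))) (S$i))"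
      by (simp add: sum.distrib[symmetric] cm_add_left[symmetric] distrib_right add.commute add_divide_distrib)
    also have "\<dots> = 0" using D unfolding Vsp_def by simp
    finally show ?thesis .
  qed
  show ?thesis unfolding Kf_def hp_sum_left using T1 T3 T23
    by (simp add: diff_diff_eq)
qed

lemma Kf_skew:
  assumes D: "D \<in> Vsp S"
  shows "hp (Kf \<sigma> S D x) y + hp x (Kf \<sigma> S D y) = 0"
proof -
  define q where "q i = 1 / complex_of_real ((\<sigma> i)\<^sup>2)" for i
  define r where "r i j = 1 / complex_of_real ((\<sigma> i)\<^sup>2 * (\<sigma> j)\<^sup>2)" for i j
  have cq: "cnj (q i) = q i" for i unfolding q_def by simp
  have cr: "cnj (r i j) = r j i" for i j unfolding r_def by (simp add: mult.commute)
  define A1 where "A1 = (\<Sum>i\<in>UNIV. hp x (S$i) * q i * hp (D$i) y)"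
  define A2 where "A2 = (\<Sum>i\<in>UNIV. hp x (D$i) * q i * hp (S$i) y)"
  define A3 where "A3 = (\<Sum>i\<in>UNIV. \<Sum>j\<in>UNIV. hp x (S$i) * (hp (D$i) (S$j) * r i j) * hp (S$j) y)"
  define B3 where "B3 = (\<Sum>i\<in>UNIV. \<Sum>j\<in>UNIV. hp (S$i) y * (cnj (hp (D$i) (S$j)) * r j i) * hp x (S$j))"
  have e1: "hp (Kf \<sigma> S D x) y = A1 - A2 - A3"
    unfolding Kf_def A1_def A2_def A3_def q_def r_def
    by (simp add: hp_sum_left)
  have e2: "hp x (Kf \<sigma> S D y) = A2 - A1 - B3"
    unfolding Kf_def A1_def A2_def B3_def q_def r_def
    by (simp add: hp_sum_right cnj_hp mult_ac divide_inverse)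
  have "A3 + B3 = 0"
  proof -
    have "B3 = (\<Sum>j\<in>UNIV. \<Sum>i\<in>UNIV. hp (S$i) y * (cnj (hp (D$i) (S$j)) * r j i) * hp x (S$j))"
      unfolding B3_def by (rule sum.swap)
    then have "A3 + B3 = (\<Sum>i\<in>UNIV. \<Sum>j\<in>UNIV. hp x (S$i) * hp (S$j) y * r i j *
        (hp (D$i) (S$j) + hp (S$i) (D$j)))"
      unfolding A3_def by (simp add: sum.distrib[symmetric] cnj_hp algebra_simps)
    also have "\<dots> = 0" using D unfolding Vsp_def by simp
    finally show ?thesis .
  qed
  moreover have "hp (Kf \<sigma> S D x) y + hp x (Kf \<sigma> S D y) = - (A3 + B3)"
    unfolding e1 e2 by (simp add: algebra_simps)
  ultimately show ?thesis by simp
qed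

lemma app_add: "app (e + f) x = app e x + app f x"
  by (simp add: app_def plus_endo.rep_eq blinfun.add_left)
lemma app_scaleR: "app (r *\<^sub>R e) x = r *\<^sub>R app e x"
  by (simp add: app_def scaleR_endo.rep_eq blinfun.scaleR_left)

lemma bl_rows:
  fixes S :: "complex^'T::finite^'m::finite"
  shows "bounded_linear (\<lambda>e::(complex^'T) endo. (\<chi> i. app e (S$i)) :: complex^'T^'m)"
proof (rule bounded_linear_intro[where K="\<Sum>i\<in>UNIV. norm (S$i)"])
  fix e f :: "(complex^'T) endo" and r :: real
  show "(\<chi> i. app (e + f) (S$i)) = ((\<chi> i. app e (S$i)) :: complex^'T^'m) + (\<chi> i. app f (S$i))"
    by (simp add: vec_eq_iff app_add)
  show "(\<chi> i. app (r *\<^sub>R e) (S$i)) = r *\<^sub>R ((\<chi> i. app e (S$i)) :: complex^'T^'m)"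
    by (simp add: vec_eq_iff app_scaleR)
  have "norm ((\<chi> i. app e (S$i)) :: complex^'T^'m) \<le> (\<Sum>i\<in>UNIV. norm (app e (S$i)))"
    unfolding norm_vec_def by (rule order_trans[OF L2_set_le_sum]) auto
  also have "\<dots> \<le> (\<Sum>i\<in>UNIV. norm e * norm (S$i))"
    by (intro sum_mono) (simp add: app_def norm_endo.rep_eq norm_blinfun)
  also have "\<dots> = norm e * (\<Sum>i\<in>UNIV. norm (S$i))" by (simp add: sum_distrib_left)
  finally show "norm ((\<chi> i. app e (S$i)) :: complex^'T^'m) \<le> norm e * (\<Sum>i\<in>UNIV. norm (S$i))" .
qed

lemma exp_preserves:
  fixes K :: "(complex^'T::finite) endo"
  assumes skew: "\<And>x y. hp (app K x) y + hp x (app K y) = 0"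
  shows "hp (app (exp (t *\<^sub>R K)) x) (app (exp (t *\<^sub>R K)) y) = hp x y"
proof -
  define f where "f s = hp (app (exp (s *\<^sub>R K)) x) (app (exp (s *\<^sub>R K)) y)" for s
  have d: "((\<lambda>s. app (exp (s *\<^sub>R K)) z) has_vector_derivative app K (app (exp (s *\<^sub>R K)) z)) (at s)" for z s
    using bounded_linear.has_vector_derivative[OF bounded_linear_app exp_scaleR_has_vector_derivative_left[of K s]]
    by (simp add: app_mult)
  have "(f has_vector_derivative 0) (at s)" for s
  proof -
    have "(f has_vector_derivative hp (app (exp (s *\<^sub>R K)) x) (app K (app (exp (s *\<^sub>R K)) y)) +
          hp (app K (app (exp (s *\<^sub>R K)) x)) (app (exp (s *\<^sub>R K)) y)) (at s)"
      unfolding f_def by (rule bounded_bilinear.has_vector_derivative[OF bounded_bilinear_hp d d])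
    then show ?thesis using skew by (simp add: add.commute)
  qed
  then have "\<And>s. s \<in> UNIV \<Longrightarrow> (f has_derivative (\<lambda>h. 0)) (at s within UNIV)"
    by (simp add: has_vector_derivative_def)
  then obtain c where "\<forall>s\<in>UNIV. f s = c" using has_derivative_zero_constant[of UNIV f] by auto
  then have "f t = f 0" by simp
  then show ?thesis unfolding f_def by (simp add: app_one)
qed

lemma curve_exists:
  fixes S D :: "complex^'T::finite^'m::finite"
  assumes S: "S \<in> Mset \<sigma>" and pos: "\<And>i. \<sigma> i > 0" and D: "D \<in> Vsp S"
  shows "\<exists>\<gamma> \<gamma>' a e. e > 0 \<and> \<gamma> 0 = S \<and>
       (\<forall>t\<in>ball 0 e. \<gamma> t \<in> Mset \<sigma> \<and> (\<gamma> has_vector_derivative \<gamma>' t) (at t)) \<and>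
       \<gamma>' 0 = D \<and> (\<gamma>' has_vector_derivative a) (at 0)"
proof -
  define K :: "(complex^'T) endo" where "K = Abs_endo (Blinfun (Kf \<sigma> S D))"
  have appK: "app K x = Kf \<sigma> S D x" for x unfolding K_def by (rule app_Abs[OF bl_Kf])
  define E where "E t = exp (t *\<^sub>R K)" for t
  define L :: "(complex^'T) endo \<Rightarrow> complex^'T^'m" where "L e = (\<chi> i. app e (S$i))" for e
  have bL: "bounded_linear L" unfolding L_def by (rule bl_rows)
  have hE: "(E has_vector_derivative K * E t) (at t)" for t
    unfolding E_def by (rule exp_scaleR_has_vector_derivative_left)
  have h1: "((\<lambda>t. L (E t)) has_vector_derivative L (K * E t)) (at t)" for t
    by (rule bounded_linear.has_vector_derivative[OF bL hE])
  have h2: "((\<lambda>t. L (K * E t)) has_vector_derivative L (K * (K * E 0))) (at 0)"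
    by (rule bounded_linear.has_vector_derivative[OF bL has_vector_derivative_mult_right[OF hE]])
  have E0: "E 0 = 1" unfolding E_def by simp
  have g0: "L (E 0) = S" unfolding E0 L_def by (simp add: app_one vec_eq_iff)
  have g'0: "L (K * E 0) = D" unfolding E0 L_def by (simp add: app_mult app_one appK Kf_S[OF S pos D] vec_eq_iff)
  have skew: "hp (app K x) y + hp x (app K y) = 0" for x y
    unfolding appK by (rule Kf_skew[OF D])
  have inM: "L (E t) \<in> Mset \<sigma>" for t
    unfolding Mset_def L_def E_def
    using exp_preserves[OF skew] Mset_hp[OF S] by simp
  show ?thesis
    apply (rule exI[of _ "\<lambda>t. L (E t)"], rule exI[of _ "\<lambda>t. L (K * E t)"], rule exI[of _ "L (K * (K * E 0))"], rule exI[of _ 1])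
    using g0 g'0 inM h1 h2 by simp
qed

lemma tangent_eq:
  assumes S: "S \<in> Mset \<sigma>" and pos: "\<And>i. \<sigma> i > 0"
  shows "tangent_space (Mset \<sigma>) S = Vsp S"
proof
  show "tangent_space (Mset \<sigma>) S \<subseteq> Vsp S" using tangent_sub_Vsp[OF S] by blast
  show "Vsp S \<subseteq> tangent_space (Mset \<sigma>) S"
  proof
    fix D assume D: "D \<in> Vsp S"
    obtain \<gamma> \<gamma>' a e where c: "e > 0" "\<gamma> 0 = S"
       "\<forall>t\<in>ball 0 e. \<gamma> t \<in> Mset \<sigma> \<and> (\<gamma> has_vector_derivative \<gamma>' t) (at t)"
       "\<gamma>' 0 = D"
      using curve_exists[OF S pos D] by blast
    have "(\<gamma> has_vector_derivative D) (at 0)" using c by force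
    then show "D \<in> tangent_space (Mset \<sigma>) S"
      unfolding tangent_space_def using c by blast
  qed
qed

lemma sff_formula:
  assumes S: "S \<in> Mset \<sigma>" and pos: "\<And>i. \<sigma> i > 0" and D: "D \<in> Vsp S"
  shows "(norm (second_fundamental_form (Mset \<sigma>) S D))\<^sup>2 = (\<Sum>i\<in>UNIV. \<Sum>j\<in>UNIV.
            4 * (cmod (hp (D$i) (D$j)))\<^sup>2 * (\<sigma> j)\<^sup>2 / ((\<sigma> i)\<^sup>2 + (\<sigma> j)\<^sup>2)\<^sup>2)"
proof -
  let ?Q = "\<lambda>w. \<exists>\<gamma> \<gamma>' a e. e > 0 \<and> \<gamma> 0 = S \<and>
       (\<forall>t\<in>ball 0 e. \<gamma> t \<in> Mset \<sigma> \<and> (\<gamma> has_vector_derivative \<gamma>' t) (at t)) \<and>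
       \<gamma>' 0 = D \<and> (\<gamma>' has_vector_derivative a) (at 0) \<and>
       w = normal_part (tangent_space (Mset \<sigma>) S) a"
  have "\<exists>w. ?Q w" using curve_exists[OF S pos D] by blast
  then have "?Q (SOME w. ?Q w)" by (rule someI_ex)
  then obtain \<gamma> \<gamma>' a e where c0: "e > 0 \<and> \<gamma> 0 = S \<and>
       (\<forall>t\<in>ball 0 e. \<gamma> t \<in> Mset \<sigma> \<and> (\<gamma> has_vector_derivative \<gamma>' t) (at t)) \<and>
       \<gamma>' 0 = D \<and> (\<gamma>' has_vector_derivative a) (at 0) \<and>
       (SOME w. ?Q w) = normal_part (tangent_space (Mset \<sigma>) S) a"
    by (elim exE) (rule that)
  have sff: "second_fundamental_form (Mset \<sigma>) S D = (SOME w. ?Q w)"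
    unfolding second_fundamental_form_def by (rule refl)
  have c: "e > 0" "\<gamma> 0 = S"
       "\<And>t. t \<in> ball 0 e \<Longrightarrow> \<gamma> t \<in> Mset \<sigma> \<and> (\<gamma> has_vector_derivative \<gamma>' t) (at t)"
       "\<gamma>' 0 = D" "(\<gamma>' has_vector_derivative a) (at 0)"
    using c0 by auto
  have w: "second_fundamental_form (Mset \<sigma>) S D = normal_part (Vsp S) a"
    using c0 sff tangent_eq[OF S pos] by simp
  have np: "(\<forall>v\<in>Vsp S. inner (normal_part (Vsp S) a) v = 0) \<and> a - normal_part (Vsp S) a \<in> Vsp S"
    by (rule normal_part_prop[OF subspace_Vsp])
  have acc: "hp (a$i) (S$j) + 2 * hp (D$i) (D$j) + hp (S$i) (a$j) = 0" for i j
    using accel_eq[of e \<gamma> \<sigma> \<gamma>' a i j] c by simp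
  show ?thesis unfolding w
    by (rule norm_formula[OF S pos _ _ acc]) (use np in auto)
qed

lemma hp_cauchy: "cmod (hp x y) \<le> norm x * norm y"
proof (cases "hp x y = 0")
  case True then show ?thesis by simp
next
  case False
  define u where "u = hp x y / complex_of_real (cmod (hp x y))"
  have nu: "cmod u = 1" unfolding u_def using False by (simp add: norm_divide)
  have hh: "hp x y * cnj (hp x y) = complex_of_real (cmod (hp x y)) * complex_of_real (cmod (hp x y))"
    by (metis complex_norm_square of_real_mult power2_eq_square)
  have "hp x (cm u y) = complex_of_real (cmod (hp x y))"
    unfolding u_def using False hh by (simp add: field_simps)
  then have "cmod (hp x y) = inner x (cm u y)" by (simp add: inner_hp)
  also have "\<dots> \<le> norm x * norm (cm u y)" by (rule norm_cauchy_schwarz)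
  also have "norm (cm u y) = norm y" by (simp add: norm_vec_def norm_mult nu)
  finally show ?thesis .
qed

lemma aux4: "4 * a * b \<le> (a + b)\<^sup>2" for a b :: real
proof -
  have "(a + b)\<^sup>2 - 4 * a * b = (a - b)\<^sup>2" by (simp add: power2_eq_square algebra_simps)
  then show ?thesis by (smt (verit) zero_le_power2)
qed

lemma aux5: "0 < y \<Longrightarrow> 0 < z \<Longrightarrow> 4 * z * x \<le> y \<Longrightarrow> 4 * x / y \<le> 1 / z" for x y z :: real
  by (simp add: field_simps)

lemma key_bound:
  fixes D :: "complex^'T::finite^'m::finite"
  assumes pos: "\<And>i. \<sigma> i > 0" and k: "\<And>i. \<sigma> k \<le> \<sigma> i" and D1: "inner D D = 1"
  shows "(\<Sum>i\<in>UNIV. \<Sum>j\<in>UNIV.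
            4 * (cmod (hp (D$i) (D$j)))\<^sup>2 * (\<sigma> j)\<^sup>2 / ((\<sigma> i)\<^sup>2 + (\<sigma> j)\<^sup>2)\<^sup>2) \<le> 1 / (\<sigma> k)\<^sup>2"
proof -
  have t: "4 * (cmod (hp (D$i) (D$j)))\<^sup>2 * (\<sigma> j)\<^sup>2 / ((\<sigma> i)\<^sup>2 + (\<sigma> j)\<^sup>2)\<^sup>2
      \<le> (norm (D$i))\<^sup>2 * (norm (D$j))\<^sup>2 / (\<sigma> k)\<^sup>2" for i j
  proof -
    have pi: "\<sigma> i > 0" "\<sigma> j > 0" "\<sigma> k > 0" using pos by auto
    have ki: "(\<sigma> k)\<^sup>2 \<le> (\<sigma> i)\<^sup>2" using k[of i] pi by (simp add: power_mono)
    have "4 * (\<sigma> k)\<^sup>2 * (\<sigma> j)\<^sup>2 \<le> ((\<sigma> k)\<^sup>2 + (\<sigma> j)\<^sup>2)\<^sup>2"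
      by (rule aux4)
    also have "\<dots> \<le> ((\<sigma> i)\<^sup>2 + (\<sigma> j)\<^sup>2)\<^sup>2"
      using ki by (intro power_mono) auto
    finally have A: "4 * (\<sigma> j)\<^sup>2 / ((\<sigma> i)\<^sup>2 + (\<sigma> j)\<^sup>2)\<^sup>2 \<le> 1 / (\<sigma> k)\<^sup>2"
      using pi by (intro aux5) auto
    have B: "(cmod (hp (D$i) (D$j)))\<^sup>2 \<le> (norm (D$i))\<^sup>2 * (norm (D$j))\<^sup>2"
      using hp_cauchy[of "D$i" "D$j"] using power_mono[OF hp_cauchy[of "D$i" "D$j"], of 2] by (simp add: power_mult_distrib)
    have "4 * (cmod (hp (D$i) (D$j)))\<^sup>2 * (\<sigma> j)\<^sup>2 / ((\<sigma> i)\<^sup>2 + (\<sigma> j)\<^sup>2)\<^sup>2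
        = (cmod (hp (D$i) (D$j)))\<^sup>2 * (4 * (\<sigma> j)\<^sup>2 / ((\<sigma> i)\<^sup>2 + (\<sigma> j)\<^sup>2)\<^sup>2)" by simp
    also have "\<dots> \<le> (norm (D$i))\<^sup>2 * (norm (D$j))\<^sup>2 * (1 / (\<sigma> k)\<^sup>2)"
      using A B by (intro mult_mono) auto
    finally show ?thesis by simp
  qed
  have "(\<Sum>i\<in>UNIV. \<Sum>j\<in>UNIV.
            4 * (cmod (hp (D$i) (D$j)))\<^sup>2 * (\<sigma> j)\<^sup>2 / ((\<sigma> i)\<^sup>2 + (\<sigma> j)\<^sup>2)\<^sup>2)
     \<le> (\<Sum>i\<in>UNIV. \<Sum>j\<in>UNIV. (norm (D$i))\<^sup>2 * (norm (D$j))\<^sup>2 / (\<sigma> k)\<^sup>2)"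
    by (intro sum_mono t)
  also have "\<dots> = (\<Sum>i\<in>UNIV. (norm (D$i))\<^sup>2) * (\<Sum>j\<in>UNIV. (norm (D$j))\<^sup>2) / (\<sigma> k)\<^sup>2"
    by (simp add: sum_product sum_divide_distrib)
  also have "(\<Sum>i\<in>UNIV. (norm (D$i))\<^sup>2) = 1"
    using D1 by (simp add: inner_vec_def power2_norm_eq_inner)
  finally show ?thesis by simp
qed

lemma exists_orth:
  fixes S :: "complex^'T::finite^'m::finite"
  assumes card: "CARD('m) < CARD('T)"
  shows "\<exists>x. inner x x = 1 \<and> (\<forall>j. hp x (S$j) = 0)"
proof -
  define B where "B = range (\<lambda>j. S$j) \<union> range (\<lambda>j. cm \<i> (S$j))"
  have fB: "finite B" unfolding B_def by simp
  have "card B \<le> card (range (\<lambda>j. S$j)) + card (range (\<lambda>j. cm \<i> (S$j)))"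
    unfolding B_def by (rule card_Un_le)
  also have "\<dots> \<le> CARD('m) + CARD('m)"
    by (intro add_mono card_image_le) auto
  finally have "card B \<le> 2 * CARD('m)" by simp
  then have "dim B < DIM(complex^'T)"
    using dim_le_card'[OF fB] card by simp
  then obtain x :: "complex^'T" where x: "x \<noteq> 0" "\<And>y. y \<in> span B \<Longrightarrow> orthogonal x y"
    by (rule orthogonal_to_subspace_exists) blast
  have h0: "hp x (S$j) = 0" for j
  proof -
    have "orthogonal x (S$j)" "orthogonal x (cm \<i> (S$j))"
      using x(2)[OF span_base[of "S$j" B]] x(2)[OF span_base[of "cm \<i> (S$j)" B]] unfolding B_def by auto
    then have "Re (hp x (S$j)) = 0" "Re (cnj \<i> * hp x (S$j)) = 0"
      unfolding orthogonal_def inner_hp by simp_all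
    then show ?thesis by (simp add: complex_eq_iff)
  qed
  define x' where "x' = (1 / norm x) *\<^sub>R x"
  have "inner x' x' = 1" unfolding x'_def using x(1)
    by (simp add: power2_norm_eq_inner[symmetric] power2_eq_square)
  moreover have "hp x' (S$j) = 0" for j unfolding x'_def using h0 by simp
  ultimately show ?thesis by blast
qed

lemma equality_case:
  fixes S :: "complex^'T::finite^'m::finite"
  assumes S: "S \<in> Mset \<sigma>" and pos: "\<And>i. \<sigma> i > 0" and card: "CARD('m) < CARD('T)"
  shows "\<exists>D\<in>Vsp S. inner D D = 1 \<and> (\<Sum>i\<in>UNIV. \<Sum>j\<in>UNIV.
            4 * (cmod (hp (D$i) (D$j)))\<^sup>2 * (\<sigma> j)\<^sup>2 / ((\<sigma> i)\<^sup>2 + (\<sigma> j)\<^sup>2)\<^sup>2) = 1 / (\<sigma> k)\<^sup>2"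
proof -
  obtain x where x: "inner x x = 1" "\<And>j. hp x (S$j) = 0" using exists_orth[OF card, of S] by blast
  have x2: "hp (S$j) x = 0" for j using x(2)[of j] cnj_hp[of x "S$j"] by simp
  have xx: "hp x x = 1" using x(1) by (simp add: hp_self)
  define D :: "complex^'T^'m" where "D = (\<chi> a. if a = k then x else 0)"
  have DV: "D \<in> Vsp S" unfolding Vsp_def D_def by (simp add: hp_if_left hp_if_right x(2) x2)
  have D1: "inner D D = 1" unfolding inner_mat D_def
    by (simp add: hp_if_left hp_if_right xx if_distrib[of Re] cong: if_cong)
  have Dij: "hp (D$i) (D$j) = (if i = k \<and> j = k then 1 else 0)" for i j
    unfolding D_def by (cases "i = k"; cases "j = k") (simp_all add: xx)
  have "(\<Sum>i\<in>UNIV. \<Sum>j\<in>UNIV.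
            4 * (cmod (hp (D$i) (D$j)))\<^sup>2 * (\<sigma> j)\<^sup>2 / ((\<sigma> i)\<^sup>2 + (\<sigma> j)\<^sup>2)\<^sup>2) =
        (\<Sum>i\<in>UNIV. \<Sum>j\<in>UNIV. if i = k then (if j = k then 4 * (\<sigma> k)\<^sup>2 / ((\<sigma> k)\<^sup>2 + (\<sigma> k)\<^sup>2)\<^sup>2 else 0) else 0)"
    unfolding Dij by (intro sum.cong refl) auto
  also have "\<dots> = (\<Sum>i\<in>UNIV. if i = k then 4 * (\<sigma> k)\<^sup>2 / ((\<sigma> k)\<^sup>2 + (\<sigma> k)\<^sup>2)\<^sup>2 else 0)"
    by (intro sum.cong refl) (cases "i = k", simp_all)
  also have "\<dots> = 4 * (\<sigma> k)\<^sup>2 / ((\<sigma> k)\<^sup>2 + (\<sigma> k)\<^sup>2)\<^sup>2" by simp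
  also have "\<dots> = 1 / (\<sigma> k)\<^sup>2" using pos[of k] by (simp add: field_simps power2_eq_square)
  finally show ?thesis using DV D1 by blast
qed

lemma M_nonempty:
  assumes card: "CARD('m::finite) < CARD('T::finite)"
  shows "\<exists>S::complex^'T^'m. S \<in> Mset \<sigma>"
proof -
  obtain f :: "'m \<Rightarrow> 'T" where f: "inj f"
    using card_le_inj[of "UNIV::'m set" "UNIV::'T set"] card by auto
  define S :: "complex^'T^'m" where "S = (\<chi> i. \<sigma> i *\<^sub>R axis (f i) 1)"
  have "hp (S$i) (S$j) = (if i = j then complex_of_real ((\<sigma> i)\<^sup>2) else 0)" for i j
  proof -
    have "hp (axis (f i) (1::complex)) (axis (f j) 1) =
        (\<Sum>\<tau>\<in>UNIV. if \<tau> = f i then (if f i = f j then 1 else 0) else 0)"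
      unfolding hp_def axis_def by (intro sum.cong refl) auto
    also have "\<dots> = (if i = j then 1 else 0)" using f by (simp add: inj_eq)
    finally have "hp (axis (f i) (1::complex)) (axis (f j) 1) = (if i = j then 1 else 0)" .
    then show ?thesis unfolding S_def by (simp add: power2_eq_square)
  qed
  then show ?thesis unfolding Mset_def by blast
qed

theorem mainTheorem7:
  fixes \<sigma> :: "'m::finite \<Rightarrow> real" and k :: 'm
  assumes "CARD('m) < CARD('T::finite)"
    and "\<And>i. \<sigma> i > 0"
    and "\<And>i. \<sigma> k \<le> \<sigma> i"
  defines "M \<equiv> (gram_level_set (diag_mat (\<lambda>i. complex_of_real ((\<sigma> i)\<^sup>2))) :: (complex^'T^'m) set)"
  shows "(\<forall>S\<in>M. \<forall>\<Delta>\<in>tangent_space M S. inner \<Delta> \<Delta> = 1 \<longrightarrow>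
            norm (second_fundamental_form M S \<Delta>) \<le> 1 / \<sigma> k)
       \<and> (\<forall>S\<in>M. \<exists>\<Delta>\<in>tangent_space M S. inner \<Delta> \<Delta> = 1 \<and>
            norm (second_fundamental_form M S \<Delta>) = 1 / \<sigma> k)
       \<and> (SUP (S, \<Delta>)\<in>{(S, \<Delta>). S \<in> M \<and> \<Delta> \<in> tangent_space M S \<and> inner \<Delta> \<Delta> = 1}.
            norm (second_fundamental_form M S \<Delta>)) = 1 / \<sigma> k"
proof -
  note card = assms(1) and pos = assms(2) and kmin = assms(3)
  have MM: "M = Mset \<sigma>" unfolding M_def by (rule M_eq)
  have sk: "\<sigma> k > 0" using pos by blast
  have sk0: "0 \<le> 1 / \<sigma> k" using sk by simp
  have P1: "norm (second_fundamental_form M S \<Delta>) \<le> 1 / \<sigma> k"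
    if S: "S \<in> M" and D: "\<Delta> \<in> tangent_space M S" and D1: "inner \<Delta> \<Delta> = 1" for S \<Delta>
  proof -
    have S': "S \<in> Mset \<sigma>" using S unfolding MM .
    have DV: "\<Delta> \<in> Vsp S" using D unfolding MM tangent_eq[OF S' pos] .
    have "(norm (second_fundamental_form M S \<Delta>))\<^sup>2 \<le> 1 / (\<sigma> k)\<^sup>2"
      unfolding MM sff_formula[OF S' pos DV]
      by (rule key_bound[where \<sigma>=\<sigma> and k=k and D=\<Delta>, OF pos kmin D1])
    then have "(norm (second_fundamental_form M S \<Delta>))\<^sup>2 \<le> (1 / \<sigma> k)\<^sup>2"
      by (simp only: power_divide power_one)
    then show ?thesis by (rule power2_le_imp_le[OF _ sk0])
  qed
  have P2: "\<exists>\<Delta>\<in>tangent_space M S. inner \<Delta> \<Delta> = 1 \<and>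
            norm (second_fundamental_form M S \<Delta>) = 1 / \<sigma> k" if S: "S \<in> M" for S
  proof -
    have S': "S \<in> Mset \<sigma>" using S unfolding MM .
    obtain \<Delta> where DV: "\<Delta> \<in> Vsp S" and D1: "inner \<Delta> \<Delta> = 1" and
      e: "(\<Sum>i\<in>UNIV. \<Sum>j\<in>UNIV.
            4 * (cmod (hp (\<Delta>$i) (\<Delta>$j)))\<^sup>2 * (\<sigma> j)\<^sup>2 / ((\<sigma> i)\<^sup>2 + (\<sigma> j)\<^sup>2)\<^sup>2) = 1 / (\<sigma> k)\<^sup>2"
      using equality_case[OF S' pos card, of k] by (elim bexE conjE)
    have "(norm (second_fundamental_form M S \<Delta>))\<^sup>2 = (1 / \<sigma> k)\<^sup>2"
      unfolding MM sff_formula[OF S' pos DV] e by (simp only: power_divide power_one)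
    then have "norm (second_fundamental_form M S \<Delta>) = 1 / \<sigma> k"
      by (rule power2_eq_imp_eq[OF _ norm_ge_zero sk0])
    moreover have "\<Delta> \<in> tangent_space M S" unfolding MM tangent_eq[OF S' pos] by (rule DV)
    ultimately show ?thesis using D1 by blast
  qed
  have P3: "(SUP (S, \<Delta>)\<in>{(S, \<Delta>). S \<in> M \<and> \<Delta> \<in> tangent_space M S \<and> inner \<Delta> \<Delta> = 1}.
            norm (second_fundamental_form M S \<Delta>)) = 1 / \<sigma> k"
  proof (rule cSup_eq_maximum)
    obtain S0 :: "complex^'T^'m" where S0: "S0 \<in> Mset \<sigma>" using M_nonempty[OF card, of \<sigma>] by blast
    then have S0M: "S0 \<in> M" unfolding MM .
    obtain \<Delta> where d: "\<Delta> \<in> tangent_space M S0" "inner \<Delta> \<Delta> = 1"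
        "norm (second_fundamental_form M S0 \<Delta>) = 1 / \<sigma> k"
      using P2[OF S0M] by (elim bexE conjE)
    have mem: "(S0, \<Delta>) \<in> {(S, \<Delta>). S \<in> M \<and> \<Delta> \<in> tangent_space M S \<and> inner \<Delta> \<Delta> = 1}"
      using S0M d by simp
    show "1 / \<sigma> k \<in> (\<lambda>(S, \<Delta>). norm (second_fundamental_form M S \<Delta>)) `
        {(S, \<Delta>). S \<in> M \<and> \<Delta> \<in> tangent_space M S \<and> inner \<Delta> \<Delta> = 1}"
      by (rule image_eqI[OF _ mem]) (simp add: d(3))
  next
    fix x assume "x \<in> (\<lambda>(S, \<Delta>). norm (second_fundamental_form M S \<Delta>)) `
        {(S, \<Delta>). S \<in> M \<and> \<Delta> \<in> tangent_space M S \<and> inner \<Delta> \<Delta> = 1}"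
    then obtain S \<Delta> where "x = norm (second_fundamental_form M S \<Delta>)" "S \<in> M"
        "\<Delta> \<in> tangent_space M S" "inner \<Delta> \<Delta> = 1" by auto
    then show "x \<le> 1 / \<sigma> k" using P1 by simp
  qed
  have A: "\<forall>S\<in>M. \<forall>\<Delta>\<in>tangent_space M S. inner \<Delta> \<Delta> = 1 \<longrightarrow>
            norm (second_fundamental_form M S \<Delta>) \<le> 1 / \<sigma> k" using P1 by blast
  have B: "\<forall>S\<in>M. \<exists>\<Delta>\<in>tangent_space M S. inner \<Delta> \<Delta> = 1 \<and>
            norm (second_fundamental_form M S \<Delta>) = 1 / \<sigma> k" using P2 by blast
  show ?thesis using A B P3 by (intro conjI)
qed

end
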